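(* Assume Condition (T) (see context) and let $(\mathbf W_t)_{t\in\mathbb Z}$, $\mathbf W_t=(W_{1,t},\dots,W_{d,t})$, be the stationary solution of $\mathbf W_t=\mathbf A_t\mathbf W_{t-1}+\mathbf B_t$. Then for every $t\in\mathbb Z$ and $i=1,\dots,d$, $$W_{i,t}=\sum_{n=0}^\infty \Pi^{(i)}_{t,t-n+1}D_{i,t-n}\quad\text{a.s.},$$ where $D_{i,t}=\sum_{j:\,i\prec j}A_{ij,t}W_{j,t-1}+B_{i,t}$ and $\Pi^{(i)}_{t,s}=A_{ii,t}A_{ii,t-1}\cdots A_{ii,s}$ for $t\ge s$, $\Pi^{(i)}_{t,s}=1$ for $t<s$.
   Context: $(\mathbf A_t,\mathbf B_t)_{t\in\mathbb Z}$ is an i.i.d. sequence of copies of $(\mathbf A,\mathbf B)$, a random $d\times d$ matrix and random vector in $\mathbb R^d$, with entries $A_{ij,t}$, $B_{i,t}$. Condition (T): (T-1) $\mathbf A\ge 0$, $\mathbf B\ge 0$ entrywise a.s.; (T-2) $\mathbb P(B_i=0)<1$ for all $i$; (T-3) $\mathbb P(A_{ij}=0)=1$ whenever $i>j$; (T-4) there exist $\alpha_1,\dots,\alpha_d>0$, pairwise distinct, with $\mathbb E A_{ii}^{\alpha_i}=1$; (T-5) $\mathbb E A_{ij}^{\alpha_i}<\infty$; (T-6) $\mathbb E B_i^{\alpha_i}<\infty$; (T-7) $\mathbb E[A_{ii}^{\alpha_i}\log^+A_{ii}]<\infty$; (T-8) the law of $\log A_{ii}$ given $\{A_{ii}>0\}$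 is non-arithmetic. Under (T) the stationary solution exists, is unique, and is given by $\mathbf W_t=\sum_{n\ge0}\mathbf A_t\cdots\mathbf A_{t-n+1}\mathbf B_{t-n}$ (empty product = identity). Write $i\prec j$ if $i\neq j$ and $\mathbb P(A_{ij}>0)>0$. *)

theory Defs
  imports "HOL-Probability.Probability"
begin

text \<open>Random matrices are functions into real^'n^'n, where the finite linearly ordered
  type 'n plays the role of the index set {1..d}.\<close>

fun mat_prod :: "(int \<Rightarrow> 'w \<Rightarrow> real^'n^'n) \<Rightarrow> int \<Rightarrow> nat \<Rightarrow> 'w \<Rightarrow> real^'n^'n" where
  "mat_prod A t 0 w = mat 1"
| "mat_prod A t (Suc n) w = mat_prod A t n w ** A (t - int n) w"

definition stat_sol :: "(int \<Rightarrow> 'w \<Rightarrow> real^'n^'n) \<Rightarrow> (int \<Rightarrow> 'w \<Rightarrow> real^'n) \<Rightarrow> int \<Rightarrow> 'w \<Rightarrow> real^'n" where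
  "stat_sol A B t w = (\<chi> i. (\<Sum>n. (mat_prod A t n w *v B (t - int n) w) $ i))"

definition diag_prod :: "(int \<Rightarrow> 'w \<Rightarrow> real^'n^'n) \<Rightarrow> 'n \<Rightarrow> int \<Rightarrow> int \<Rightarrow> 'w \<Rightarrow> real" where
  "diag_prod A i t s w = (\<Prod>k\<in>{s..t}. A k w $ i $ i)"

text \<open>i \<prec> j iff i \<noteq> j and P(A_ij > 0) > 0 (law of the generic copy A = A_0).\<close>
definition prec :: "'w measure \<Rightarrow> (int \<Rightarrow> 'w \<Rightarrow> real^'n^'n) \<Rightarrow> 'n \<Rightarrow> 'n \<Rightarrow> bool" where
  "prec M A i j \<longleftrightarrow> i \<noteq> j \<and> measure M {w \<in> space M. A 0 w $ i $ j > 0} > 0"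

definition D_term :: "'w measure \<Rightarrow> (int \<Rightarrow> 'w \<Rightarrow> real^'n^'n) \<Rightarrow> (int \<Rightarrow> 'w \<Rightarrow> real^'n)
    \<Rightarrow> (int \<Rightarrow> 'w \<Rightarrow> real^'n) \<Rightarrow> 'n \<Rightarrow> int \<Rightarrow> 'w \<Rightarrow> real" where
  "D_term M A B W i t w = (\<Sum>j\<in>{j. prec M A i j}. A t w $ i $ j * W (t - 1) w $ j) + B t w $ i"

definition non_arithmetic_log :: "'w measure \<Rightarrow> ('w \<Rightarrow> real) \<Rightarrow> bool" where
  "non_arithmetic_log M X \<longleftrightarrow>
     \<not> (\<exists>h>0. AE w in M. X w > 0 \<longrightarrow> (\<exists>k::int. ln (X w) = h * of_int k))"

end

theory Submission
  imports Defs
begin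


lemma mat_prod_nonneg:
  assumes "\<And>t i j. A t w $ i $ j \<ge> (0::real)"
  shows "mat_prod A t n w $ i $ j \<ge> 0"
  using assms
proof (induction n arbitrary: i j)
  case 0 then show ?case by (simp add: mat_def)
next
  case (Suc n)
  then show ?case by (auto simp: matrix_matrix_mult_def intro!: sum_nonneg)
qed

lemma mat_prod_Suc_left:
  "mat_prod A t (Suc n) w = A t w ** mat_prod A (t - 1) n w"
proof (induction n)
  case 0 then show ?case by simp
next
  case (Suc n)
  have "mat_prod A t (Suc (Suc n)) w = (A t w ** mat_prod A (t - 1) n w) ** A (t - int (Suc n)) w"
    using Suc by simp
  also have "\<dots> = A t w ** (mat_prod A (t - 1) n w ** A (t - 1 - int n) w)"
    by (simp add: matrix_mul_assoc algebra_simps)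
  finally show ?case by simp
qed

lemma mat_prod_add:
  "mat_prod A t (N + m) w = mat_prod A t N w ** mat_prod A (t - int N) m w"
proof (induction m)
  case 0 then show ?case by (simp add: matrix_mul_rid)
next
  case (Suc m)
  then show ?case by (simp add: matrix_mul_assoc algebra_simps)
qed

lemma diag_le_mat_prod:
  assumes "\<And>t i j. A t w $ i $ j \<ge> (0::real)"
  shows "diag_prod A i t (t - int N + 1) w \<le> mat_prod A t N w $ i $ i"
proof (induction N)
  case 0 then show ?case by (simp add: diag_prod_def mat_def)
next
  case (Suc N)
  have eq: "{t - int (Suc N) + 1..t} = insert (t - int N) {t - int N + 1..t}" by auto
  have "diag_prod A i t (t - int (Suc N) + 1) w = diag_prod A i t (t - int N + 1) w * A (t - int N) w $ i $ i"
    unfolding diag_prod_def eq by (simp add: mult.commute)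
  also have "\<dots> \<le> mat_prod A t N w $ i $ i * A (t - int N) w $ i $ i"
    using Suc assms by (simp add: mult_right_mono)
  also have "\<dots> \<le> (\<Sum>k\<in>UNIV. mat_prod A t N w $ i $ k * A (t - int N) w $ k $ i)"
    by (rule member_le_sum[where f="\<lambda>k. mat_prod A t N w $ i $ k * A (t - int N) w $ k $ i"])
       (auto intro!: mult_nonneg_nonneg mat_prod_nonneg assms)
  finally show ?case by (simp add: matrix_matrix_mult_def)
qed


lemma stat_sol_rec:
  fixes A :: "int \<Rightarrow> 'w \<Rightarrow> real^'n^'n"
  assumes summ: "\<And>t i. summable (\<lambda>n. (mat_prod A t n w *v B (t - int n) w) $ i)"
  shows "stat_sol A B t w $ i = (\<Sum>j\<in>UNIV. A t w $ i $ j * stat_sol A B (t - 1) w $ j) + B t w $ i"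
proof -
  define f where "f = (\<lambda>n. (mat_prod A t n w *v B (t - int n) w) $ i)"
  define g where "g = (\<lambda>j n. (mat_prod A (t - 1) n w *v B (t - 1 - int n) w) $ j)"
  have fS: "f (Suc n) = (\<Sum>j\<in>UNIV. A t w $ i $ j * g j n)" for n
  proof -
    have e: "t - int (Suc n) = t - 1 - int n" by simp
    have "(A t w ** mat_prod A (t - 1) n w) *v B (t - 1 - int n) w
       = A t w *v (mat_prod A (t - 1) n w *v B (t - 1 - int n) w)"
      by (simp add: matrix_vector_mul_assoc)
    then show ?thesis
      unfolding f_def g_def mat_prod_Suc_left e
      by (simp add: matrix_vector_mult_def)
  qed
  have sg: "summable (g j)" for j unfolding g_def using summ[of "t - 1" j] by simp
  have "stat_sol A B t w $ i = suminf f" by (simp add: stat_sol_def f_def)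
  also have "\<dots> = (\<Sum>n. f (Suc n)) + f 0"
    using suminf_split_head[of f] summ[of t i] by (simp add: f_def)
  also have "(\<Sum>n. f (Suc n)) = (\<Sum>n. \<Sum>j\<in>UNIV. A t w $ i $ j * g j n)" by (simp add: fS)
  also have "\<dots> = (\<Sum>j\<in>UNIV. \<Sum>n. A t w $ i $ j * g j n)"
    by (rule suminf_sum) (intro summable_mult sg)
  also have "\<dots> = (\<Sum>j\<in>UNIV. A t w $ i $ j * stat_sol A B (t - 1) w $ j)"
  proof (intro sum.cong refl)
    fix j
    have "stat_sol A B (t - 1) w $ j = suminf (g j)" by (simp add: stat_sol_def g_def)
    then show "(\<Sum>n. A t w $ i $ j * g j n) = A t w $ i $ j * stat_sol A B (t - 1) w $ j"
      using suminf_mult[OF sg[of j], of "A t w $ i $ j"] by simp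
  qed
  also have "f 0 = B t w $ i" by (simp add: f_def)
  finally show ?thesis .
qed

lemma stat_sol_rec2:
  fixes A :: "int \<Rightarrow> 'w \<Rightarrow> real^'n^'n"
  assumes summ: "\<And>t i. summable (\<lambda>n. (mat_prod A t n w *v B (t - int n) w) $ i)"
    and zero: "\<And>t i j. j \<noteq> i \<Longrightarrow> j \<notin> S i \<Longrightarrow> A t w $ i $ j = 0"
    and notin: "\<And>i. i \<notin> S i"
  shows "stat_sol A B t w $ i = A t w $ i $ i * stat_sol A B (t - 1) w $ i +
     ((\<Sum>j\<in>S i. A t w $ i $ j * stat_sol A B (t - 1) w $ j) + B t w $ i)"
proof -
  let ?h = "\<lambda>j. A t w $ i $ j * stat_sol A B (t - 1) w $ j"
  have "(\<Sum>j\<in>UNIV. ?h j) = (\<Sum>j\<in>insert i (S i). ?h j)"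
    by (rule sum.mono_neutral_right) (auto simp: zero)
  also have "\<dots> = ?h i + (\<Sum>j\<in>S i. ?h j)"
    using notin by (simp add: sum.insert_if)
  finally show ?thesis using stat_sol_rec[where A=A and B=B and t=t and i=i, OF summ] by simp
qed


lemma det_main:
  fixes A :: "int \<Rightarrow> 'w \<Rightarrow> real^'n^'n"
  assumes nnA: "\<And>t i j. A t w $ i $ j \<ge> 0" and nnB: "\<And>t i. B t w $ i \<ge> 0"
    and summ: "\<And>t i. summable (\<lambda>n. (mat_prod A t n w *v B (t - int n) w) $ i)"
    and zero: "\<And>t i j. j \<noteq> i \<Longrightarrow> j \<notin> S i \<Longrightarrow> A t w $ i $ j = 0"
    and notin: "\<And>i. i \<notin> S i"
  shows "stat_sol A B t w $ i = (\<Sum>n. diag_prod A i t (t - int n + 1) w *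
     ((\<Sum>j\<in>S i. A (t - int n) w $ i $ j * stat_sol A B (t - int n - 1) w $ j) + B (t - int n) w $ i))"
proof -
  define W where "W = (\<lambda>u. stat_sol A B u w $ i)"
  define D where "D = (\<lambda>u. (\<Sum>j\<in>S i. A u w $ i $ j * stat_sol A B (u - 1) w $ j) + B u w $ i)"
  define P where "P = (\<lambda>N. diag_prod A i t (t - int N + 1) w)"
  define X where "X = (\<lambda>k. (mat_prod A t k w *v B (t - int k) w) $ i)"
  have rec: "W u = A u w $ i $ i * W (u - 1) + D u" for u
    unfolding W_def D_def by (rule stat_sol_rec2[where A=A and B=B and S=S and w=w, OF summ zero notin])
  have PS: "P (Suc N) = P N * A (t - int N) w $ i $ i" for N
  proof -
    have eq: "{t - int (Suc N) + 1..t} = insert (t - int N) {t - int N + 1..t}" by auto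
    show ?thesis unfolding P_def diag_prod_def eq by (simp add: mult.commute)
  qed
  have Pnn: "P N \<ge> 0" for N unfolding P_def diag_prod_def by (auto intro!: prod_nonneg nnA)
  have iter: "W t = (\<Sum>n<N. P n * D (t - int n)) + P N * W (t - int N)" for N
  proof (induction N)
    case 0 then show ?case by (simp add: P_def diag_prod_def)
  next
    case (Suc N)
    have e: "t - int N - 1 = t - int (Suc N)" by simp
    have "P N * W (t - int N) = P N * D (t - int N) + P (Suc N) * W (t - int (Suc N))"
      using rec[of "t - int N"] unfolding PS e by (simp add: algebra_simps)
    with Suc show ?case by simp
  qed
  have Ynn: "0 \<le> (mat_prod A u m w *v v) $ j" if "\<And>j. v $ j \<ge> 0" for u m v j
    using that by (auto simp: matrix_vector_mult_def intro!: sum_nonneg mult_nonneg_nonneg mat_prod_nonneg nnA)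
  have Xnn: "X k \<ge> 0" for k unfolding X_def by (rule Ynn) (rule nnB)
  have sX: "summable X" using summ[of t i] by (simp add: X_def)
  have rem_le: "P N * W (t - int N) \<le> (\<Sum>m. X (m + N))" for N
  proof -
    define Y where "Y = (\<lambda>m. (mat_prod A (t - int N) m w *v B (t - int N - int m) w) $ i)"
    have sY: "summable Y" using summ[of "t - int N" i] by (simp add: Y_def)
    have WY: "W (t - int N) = suminf Y" by (simp add: W_def Y_def stat_sol_def)
    have le: "P N * Y m \<le> X (m + N)" for m
    proof -
      let ?b = "B (t - int N - int m) w"
      let ?Q = "mat_prod A (t - int N) m w"
      have b: "B (t - int (m + N)) w = ?b" by (simp add: algebra_simps)
      have "X (m + N) = (mat_prod A t N w *v (?Q *v ?b)) $ i"
        unfolding X_def b by (simp add: add.commute[of m N] mat_prod_add matrix_vector_mul_assoc)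
      also have "\<dots> = (\<Sum>j\<in>UNIV. mat_prod A t N w $ i $ j * (?Q *v ?b) $ j)"
        by (simp add: matrix_vector_mult_def)
      also have "\<dots> \<ge> mat_prod A t N w $ i $ i * (?Q *v ?b) $ i"
        by (rule member_le_sum[where f="\<lambda>j. mat_prod A t N w $ i $ j * (?Q *v ?b) $ j"])
           (auto intro!: mult_nonneg_nonneg mat_prod_nonneg nnA Ynn nnB)
      moreover have "P N * Y m \<le> mat_prod A t N w $ i $ i * (?Q *v ?b) $ i"
        unfolding P_def Y_def
        by (intro mult_right_mono diag_le_mat_prod nnA Ynn nnB)
      ultimately show ?thesis by linarith
    qed
    have "P N * W (t - int N) = (\<Sum>m. P N * Y m)" by (simp add: WY suminf_mult sY)
    also have "\<dots> \<le> (\<Sum>m. X (m + N))"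
      by (intro suminf_le le summable_mult sY) (simp add: summable_ignore_initial_segment sX)
    finally show ?thesis .
  qed
  have rem_nn: "0 \<le> P N * W (t - int N)" for N
    unfolding W_def stat_sol_def
    by (auto intro!: mult_nonneg_nonneg Pnn suminf_nonneg Ynn nnB summ)
  have tail: "(\<lambda>N. \<Sum>m. X (m + N)) \<longlonglongrightarrow> 0"
  proof -
    have "(\<lambda>N. suminf X - (\<Sum>i<N. X i)) \<longlonglongrightarrow> suminf X - suminf X"
      by (intro tendsto_diff tendsto_const summable_LIMSEQ sX)
    moreover have "(\<Sum>m. X (m + N)) = suminf X - (\<Sum>i<N. X i)" for N
      using suminf_split_initial_segment[OF sX, of N] by simp
    ultimately show ?thesis by simp
  qed
  have rem0: "(\<lambda>N. P N * W (t - int N)) \<longlonglongrightarrow> 0"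
    by (rule tendsto_sandwich[OF _ _ tendsto_const tail]) (auto intro!: always_eventually rem_nn rem_le)
  have "(\<lambda>n. P n * D (t - int n)) sums W t"
  proof -
    have "(\<lambda>N. W t - P N * W (t - int N)) \<longlonglongrightarrow> W t - 0"
      by (intro tendsto_diff tendsto_const rem0)
    moreover have "W t - P N * W (t - int N) = (\<Sum>n<N. P n * D (t - int n))" for N
      using iter[of N] by simp
    ultimately show ?thesis unfolding sums_def by simp
  qed
  then have "W t = (\<Sum>n. P n * D (t - int n))" by (simp add: sums_iff)
  then show ?thesis by (simp add: W_def P_def D_def)
qed


lemma cont_meas_borel: "continuous_on UNIV h \<Longrightarrow> h \<in> borel_measurable borel"
  by (rule borel_measurable_continuous_onI)

locale LS = prob_space M for M :: "'w measure" +
  fixes A :: "int \<Rightarrow> 'w \<Rightarrow> real^'n::finite^'n"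
    and B :: "int \<Rightarrow> 'w \<Rightarrow> real^'n"
  assumes indep: "indep_vars (\<lambda>_. borel) (\<lambda>t w. (A t w, B t w)) UNIV"
    and iid: "\<And>t. distr M borel (\<lambda>w. (A t w, B t w)) = distr M borel (\<lambda>w. (A 0 w, B 0 w))"
begin

definition "Z t w = (A t w, B t w)"

lemma Z_meas[measurable]: "Z t \<in> measurable M borel"
  using indep unfolding indep_vars_def Z_def by auto

lemma cont_comp_meas: "continuous_on UNIV h \<Longrightarrow> (\<lambda>w. h (Z t w)) \<in> borel_measurable M"
  by (rule measurable_compose[OF Z_meas cont_meas_borel])

lemma A_meas[measurable]: "(\<lambda>w. A t w $ i $ j) \<in> borel_measurable M"
proof -
  have "continuous_on UNIV (\<lambda>p::(real^'n^'n) \<times> (real^'n). fst p $ i $ j)"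
    by (intro continuous_intros)
  from cont_comp_meas[OF this, of t] show ?thesis by (simp add: Z_def)
qed

lemma B_meas[measurable]: "(\<lambda>w. B t w $ i) \<in> borel_measurable M"
proof -
  have "continuous_on UNIV (\<lambda>p::(real^'n^'n) \<times> (real^'n). snd p $ i)"
    by (intro continuous_intros)
  from cont_comp_meas[OF this, of t] show ?thesis by (simp add: Z_def)
qed

lemma iidZ: "distr M borel (Z t) = distr M borel (Z 0)"
  using iid[of t] by (simp add: Z_def[abs_def])

lemma iid_nn:
  assumes g: "g \<in> borel_measurable borel"
  shows "(\<integral>\<^sup>+ w. g (Z t w) \<partial>M) = (\<integral>\<^sup>+ w. g (Z 0 w) \<partial>M)"
proof -
  have "(\<integral>\<^sup>+ w. g (Z t w) \<partial>M) = (\<integral>\<^sup>+ x. g x \<partial>distr M borel (Z t))"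
    using g by (simp add: nn_integral_distr)
  also have "\<dots> = (\<integral>\<^sup>+ x. g x \<partial>distr M borel (Z 0))"
    unfolding iidZ[of t] ..
  also have "\<dots> = (\<integral>\<^sup>+ w. g (Z 0 w) \<partial>M)"
    using g by (simp add: nn_integral_distr)
  finally show ?thesis .
qed

lemma iid_AE:
  assumes P: "{x \<in> space borel. P x} \<in> sets borel" and ae: "AE w in M. P (Z 0 w)"
  shows "AE w in M. P (Z t w)"
proof -
  have "AE x in distr M borel (Z 0). P x" using ae P by (simp add: AE_distr_iff)
  then have "AE x in distr M borel (Z t). P x" unfolding iidZ[of t] .
  then show ?thesis using P by (simp add: AE_distr_iff)
qed

lemma indep2:
  assumes KL: "K \<inter> L = {}"
    and f: "f \<in> borel_measurable (PiM K (\<lambda>_. borel))" and g: "g \<in> borel_measurable (PiM L (\<lambda>_. borel))"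
    and fnn: "\<And>x. f x \<ge> 0" and gnn: "\<And>x. g x \<ge> 0"
  shows "(\<integral>\<^sup>+ w. ennreal (f (restrict (\<lambda>i. Z i w) K) * g (restrict (\<lambda>i. Z i w) L)) \<partial>M)
       = (\<integral>\<^sup>+ w. ennreal (f (restrict (\<lambda>i. Z i w) K)) \<partial>M) * (\<integral>\<^sup>+ w. ennreal (g (restrict (\<lambda>i. Z i w) L)) \<partial>M)"
proof -
  have ind0: "indep_vars (\<lambda>_. borel) Z UNIV" using indep by (simp add: Z_def[abs_def])
  have "indep_var (PiM K (\<lambda>_. borel)) (\<lambda>w. restrict (\<lambda>i. Z i w) K) (PiM L (\<lambda>_. borel)) (\<lambda>w. restrict (\<lambda>i. Z i w) L)"
    by (rule indep_var_restrict[OF ind0 KL]) auto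
  moreover have f': "(\<lambda>x. ennreal (f x)) \<in> borel_measurable (PiM K (\<lambda>_. borel))" using f by measurable
  moreover have g': "(\<lambda>x. ennreal (g x)) \<in> borel_measurable (PiM L (\<lambda>_. borel))" using g by measurable
  ultimately have iv: "indep_var borel (\<lambda>w. ennreal (f (restrict (\<lambda>i. Z i w) K))) borel (\<lambda>w. ennreal (g (restrict (\<lambda>i. Z i w) L)))"
    using indep_var_compose[of _ _ _ _ "\<lambda>x. ennreal (f x)" borel "\<lambda>x. ennreal (g x)" borel]
    by (simp add: comp_def)
  define X where "X = case_bool (\<lambda>w. ennreal (f (restrict (\<lambda>i. Z i w) K))) (\<lambda>w. ennreal (g (restrict (\<lambda>i. Z i w) L)))"
  have indX: "indep_vars (\<lambda>_. borel) X UNIV"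
    using iv unfolding indep_var_def X_def
    by (rule indep_vars_cong[THEN iffD1, rotated 3]) (auto split: bool.split)
  have Xnn: "\<And>b w. b \<in> UNIV \<Longrightarrow> 0 \<le> X b w" by (auto simp: X_def fnn gnn split: bool.split)
  have "(\<integral>\<^sup>+\<omega>. (\<Prod>b\<in>UNIV. X b \<omega>) \<partial>M) = (\<Prod>b\<in>UNIV. \<integral>\<^sup>+\<omega>. X b \<omega> \<partial>M)"
    by (rule indep_vars_nn_integral[OF _ indX Xnn]) simp
  then show ?thesis
    by (simp add: UNIV_bool X_def mult.commute ennreal_mult' fnn gnn)
qed

end


context LS begin

lemma mat_prod_local:
  assumes "\<And>m. m < n \<Longrightarrow> t - int m \<in> K"
  shows "mat_prod A t n w = mat_prod (\<lambda>k x. fst (x k)) t n (restrict (\<lambda>i. Z i w) K)"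
  using assms
proof (induction n)
  case 0 then show ?case by simp
next
  case (Suc n)
  then show ?case by (simp add: Z_def)
qed

lemma comp_meas_Pi:
  assumes "a \<in> K"
  shows "(\<lambda>x::int \<Rightarrow> (real^'n^'n) \<times> (real^'n). fst (x a) $ k $ j) \<in> borel_measurable (PiM K (\<lambda>_. borel))"
proof -
  have "continuous_on UNIV (\<lambda>p::(real^'n^'n) \<times> (real^'n). fst p $ k $ j)"
    by (intro continuous_intros)
  then have "(\<lambda>p::(real^'n^'n) \<times> (real^'n). fst p $ k $ j) \<in> borel_measurable borel"
    by (rule cont_meas_borel)
  from measurable_compose[OF measurable_component_singleton[OF assms] this]
  show ?thesis .
qed

lemma mat_prod_meas_Pi:
  assumes "\<And>m. m < n \<Longrightarrow> t - int m \<in> K"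
  shows "(\<lambda>x::int \<Rightarrow> (real^'n^'n) \<times> (real^'n). mat_prod (\<lambda>k x. fst (x k)) t n x $ i $ j)
           \<in> borel_measurable (PiM K (\<lambda>_. borel))"
  using assms
proof (induction n arbitrary: i j)
  case 0 then show ?case by simp
next
  case (Suc n)
  have IH: "(\<lambda>x::int \<Rightarrow> (real^'n^'n) \<times> (real^'n). mat_prod (\<lambda>k x. fst (x k)) t n x $ i $ l)
           \<in> borel_measurable (PiM K (\<lambda>_. borel))" for l
    using Suc by auto
  have C: "(\<lambda>x::int \<Rightarrow> (real^'n^'n) \<times> (real^'n). fst (x (t - int n)) $ l $ j) \<in> borel_measurable (PiM K (\<lambda>_. borel))" for l
    using Suc.prems by (intro comp_meas_Pi) auto
  show ?case
    by (simp add: matrix_matrix_mult_def) (intro borel_measurable_sum borel_measurable_times IH C)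
qed

lemma E_step:
  assumes g: "g \<in> borel_measurable borel" and gnn: "\<And>x. g x \<ge> 0"
  shows "(\<integral>\<^sup>+ w. ennreal ((mat_prod A t n w $ i $ k) powr s * g (Z (t - int n) w)) \<partial>M)
       = (\<integral>\<^sup>+ w. ennreal ((mat_prod A t n w $ i $ k) powr s) \<partial>M) * (\<integral>\<^sup>+ w. ennreal (g (Z 0 w)) \<partial>M)"
proof -
  define K where "K = {t - int n + 1..t}"
  define L where "L = {t - int n}"
  have KL: "K \<inter> L = {}" by (auto simp: K_def L_def)
  have inK: "\<And>m. m < n \<Longrightarrow> t - int m \<in> K" by (auto simp: K_def)
  define f where "f = (\<lambda>x::int \<Rightarrow> (real^'n^'n) \<times> (real^'n). (mat_prod (\<lambda>k x. fst (x k)) t n x $ i $ k) powr s)"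
  define g' where "g' = (\<lambda>x::int \<Rightarrow> (real^'n^'n) \<times> (real^'n). g (x (t - int n)))"
  have fm: "f \<in> borel_measurable (PiM K (\<lambda>_. borel))"
    unfolding f_def by (intro powr_real_measurable mat_prod_meas_Pi inK) auto
  have gm: "g' \<in> borel_measurable (PiM L (\<lambda>_. borel))"
    unfolding g'_def
    by (rule measurable_compose[OF measurable_component_singleton[of "t - int n" L "\<lambda>_. borel"] g]) (simp add: L_def)
  have e1: "f (restrict (\<lambda>i. Z i w) K) = (mat_prod A t n w $ i $ k) powr s" for w
    unfolding f_def using mat_prod_local[OF inK, where w=w] by simp
  have e2: "g' (restrict (\<lambda>i. Z i w) L) = g (Z (t - int n) w)" for w
    by (simp add: g'_def L_def)
  have "(\<integral>\<^sup>+ w. ennreal (g (Z (t - int n) w)) \<partial>M) = (\<integral>\<^sup>+ w. ennreal (g (Z 0 w)) \<partial>M)"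
    by (rule iid_nn) (use g in measurable)
  moreover have "\<And>x. 0 \<le> f x" "\<And>x. 0 \<le> g' x" by (auto simp: f_def g'_def gnn)
  ultimately show ?thesis using indep2[OF KL fm gm] e1 e2 by simp
qed

end


lemma le_powr_small: fixes x s :: real
  assumes "0 \<le> x" "x \<le> 1" "0 < s" "s \<le> 1" shows "x \<le> x powr s"
proof (cases "x = 0")
  case True then show ?thesis by simp
next
  case False
  then have "x powr 1 \<le> x powr s" using assms by (intro powr_mono') auto
  then show ?thesis using False assms by simp
qed

lemma powr_add_le: fixes a b s :: real
  assumes "0 \<le> a" "0 \<le> b" "0 < s" "s \<le> 1"
  shows "(a + b) powr s \<le> a powr s + b powr s"
proof (cases "a + b = 0")
  case True then show ?thesis using assms by simp
next
  case False
  define c where "c = a + b"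
  have c: "c > 0" using False assms by (simp add: c_def)
  have "a powr s = c powr s * (a / c) powr s" using c assms by (simp add: powr_divide)
  also have "\<dots> \<ge> c powr s * (a / c)"
    using c assms by (intro mult_left_mono le_powr_small) (auto simp: c_def field_simps)
  finally have 1: "c powr s * (a / c) \<le> a powr s" .
  have "b powr s = c powr s * (b / c) powr s" using c assms by (simp add: powr_divide)
  also have "\<dots> \<ge> c powr s * (b / c)"
    using c assms by (intro mult_left_mono le_powr_small) (auto simp: c_def field_simps)
  finally have 2: "c powr s * (b / c) \<le> b powr s" .
  have "c powr s * (a / c) + c powr s * (b / c) = c powr s * ((a + b) / c)"
    by (simp add: add_divide_distrib distrib_left)
  also have "\<dots> = c powr s" using c by (simp add: c_def)
  finally have "c powr s = c powr s * (a / c) + c powr s * (b / c)" by simp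
  with 1 2 show ?thesis unfolding c_def by linarith
qed

lemma powr_sum_le: fixes a :: "'a \<Rightarrow> real"
  assumes "\<And>k. a k \<ge> 0" "0 < s" "s \<le> 1"
  shows "(\<Sum>k\<in>I. a k) powr s \<le> (\<Sum>k\<in>I. a k powr s)"
proof (induction I rule: infinite_finite_induct)
  case (infinite A) then show ?case by simp
next
  case empty then show ?case by simp
next
  case (insert x F)
  have "(\<Sum>k\<in>insert x F. a k) powr s = (a x + (\<Sum>k\<in>F. a k)) powr s" using insert by simp
  also have "\<dots> \<le> a x powr s + (\<Sum>k\<in>F. a k) powr s"
    using assms by (intro powr_add_le sum_nonneg) auto
  also have "\<dots> \<le> a x powr s + (\<Sum>k\<in>F. a k powr s)" using insert by simp
  finally show ?case using insert by simp
qed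

lemma summable_from_powr:
  fixes x :: "nat \<Rightarrow> real"
  assumes nn: "\<And>n. x n \<ge> 0" and s: "0 < s" "s \<le> 1" and sm: "summable (\<lambda>n. x n powr s)"
  shows "summable x"
proof -
  have "(\<lambda>n. x n powr s) \<longlonglongrightarrow> 0" by (rule summable_LIMSEQ_zero[OF sm])
  then have "eventually (\<lambda>n. norm (x n powr s) < 1) sequentially"
    by (simp add: order_tendstoD(2) tendsto_norm_zero)
  then have ev: "eventually (\<lambda>n. norm (x n) \<le> x n powr s) sequentially"
  proof (rule eventually_mono)
    fix n assume a: "norm (x n powr s) < 1"
    have "x n \<le> 1"
    proof (rule ccontr)
      assume "\<not> x n \<le> 1"
      then have "1 < x n" by simp
      then have "1 < x n powr s" using s by (simp add: powr_less_one)
      with a show False by simp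
    qed
    then show "norm (x n) \<le> x n powr s" using nn s by (simp add: le_powr_small)
  qed
  show ?thesis by (rule summable_comparison_test_ev[OF ev sm])
qed


lemma fst_nth_meas[measurable]:
  "(\<lambda>p::(real^'n::finite^'n) \<times> (real^'n). fst p $ i $ j) \<in> borel_measurable borel"
  by (rule cont_meas_borel) (intro continuous_intros)

lemma snd_nth_meas[measurable]:
  "(\<lambda>p::(real^'n::finite^'n) \<times> (real^'n). snd p $ i) \<in> borel_measurable borel"
  by (rule cont_meas_borel) (intro continuous_intros)

locale LS2 = LS +
  assumes nn0: "AE w in M. (\<forall>i j. A 0 w $ i $ j \<ge> 0) \<and> (\<forall>i. B 0 w $ i \<ge> 0)"
begin

lemma nn_all: "AE w in M. \<forall>t. (\<forall>i j. A t w $ i $ j \<ge> 0) \<and> (\<forall>i. B t w $ i \<ge> 0)"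
proof -
  let ?P = "\<lambda>p::(real^'n^'n) \<times> (real^'n). (\<forall>i j. fst p $ i $ j \<ge> 0) \<and> (\<forall>i. snd p $ i \<ge> 0)"
  have P: "{x \<in> space borel. ?P x} \<in> sets borel" by measurable
  have "AE w in M. ?P (Z 0 w)" using nn0 by (simp add: Z_def)
  then have "AE w in M. ?P (Z t w)" for t by (rule iid_AE[OF P])
  then show ?thesis unfolding AE_all_countable by (simp add: Z_def)
qed

end


context LS2 begin

lemma mat_prod_meas[measurable]: "(\<lambda>w. mat_prod A t n w $ i $ j) \<in> borel_measurable M"
proof (induction n arbitrary: i j)
  case 0 then show ?case by simp
next
  case (Suc n)
  then show ?case by (simp add: matrix_matrix_mult_def)
qed

lemma conv:
  fixes s r :: real and v :: "'b \<Rightarrow> real"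
  assumes s: "0 < s" "s \<le> 1" and r: "0 \<le> r" "r < 1" and v: "\<And>k. v k > 0"
    and Mv: "\<And>k. (\<Sum>l\<in>UNIV. (\<integral>\<^sup>+w. ennreal ((A 0 w $ k $ l) powr s) \<partial>M) * ennreal (v l)) \<le> ennreal (r * v k)"
    and Bv: "\<And>j. (\<integral>\<^sup>+w. ennreal ((B 0 w $ j) powr s) \<partial>M) \<le> ennreal (v j)"
  shows "AE w in M. summable (\<lambda>n. (mat_prod A t n w *v B (t - int n) w) $ i)"
proof -
  define E where "E n j = (\<integral>\<^sup>+w. ennreal ((mat_prod A t n w $ i $ j) powr s) \<partial>M)" for n j
  define m where "m k l = (\<integral>\<^sup>+w. ennreal ((A 0 w $ k $ l) powr s) \<partial>M)" for k l
  define X where "X n w = (mat_prod A t n w *v B (t - int n) w) $ i" for n w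
  have Pnn: "AE w in M. \<forall>n i j. mat_prod A t n w $ i $ j \<ge> 0"
    using nn_all by eventually_elim (auto intro: mat_prod_nonneg)
  have Xnn: "AE w in M. \<forall>n. X n w \<ge> 0"
    using nn_all by eventually_elim
      (auto simp: X_def matrix_vector_mult_def intro!: sum_nonneg mult_nonneg_nonneg mat_prod_nonneg)
  have step: "E (Suc n) j \<le> (\<Sum>k\<in>UNIV. E n k * m k j)" for n j
  proof -
    have "E (Suc n) j \<le> (\<integral>\<^sup>+w. (\<Sum>k\<in>UNIV. ennreal ((mat_prod A t n w $ i $ k) powr s *
              (fst (Z (t - int n) w) $ k $ j) powr s)) \<partial>M)"
      unfolding E_def
    proof (rule nn_integral_mono_AE)
      show "AE w in M. ennreal ((mat_prod A t (Suc n) w $ i $ j) powr s) \<le>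
          (\<Sum>k\<in>UNIV. ennreal ((mat_prod A t n w $ i $ k) powr s * (fst (Z (t - int n) w) $ k $ j) powr s))"
        using nn_all Pnn
      proof eventually_elim
        case (elim w)
        have "(mat_prod A t (Suc n) w $ i $ j) powr s
            = (\<Sum>k\<in>UNIV. mat_prod A t n w $ i $ k * A (t - int n) w $ k $ j) powr s"
          by (simp add: matrix_matrix_mult_def)
        also have "\<dots> \<le> (\<Sum>k\<in>UNIV. (mat_prod A t n w $ i $ k * A (t - int n) w $ k $ j) powr s)"
          using elim s by (intro powr_sum_le) auto
        also have "\<dots> = (\<Sum>k\<in>UNIV. (mat_prod A t n w $ i $ k) powr s * (fst (Z (t - int n) w) $ k $ j) powr s)"
          using elim by (intro sum.cong refl) (simp add: powr_mult Z_def)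
        finally show ?case by (simp add: ennreal_leI)
      qed
    qed
    also have "\<dots> = (\<Sum>k\<in>UNIV. \<integral>\<^sup>+w. ennreal ((mat_prod A t n w $ i $ k) powr s *
              (fst (Z (t - int n) w) $ k $ j) powr s) \<partial>M)"
      by (rule nn_integral_sum) (simp add: Z_def)
    also have "\<dots> = (\<Sum>k\<in>UNIV. E n k * m k j)"
    proof (intro sum.cong refl)
      fix k
      have g: "(\<lambda>p::(real^'b^'b) \<times> (real^'b). (fst p $ k $ j) powr s) \<in> borel_measurable borel"
        by measurable
      show "(\<integral>\<^sup>+w. ennreal ((mat_prod A t n w $ i $ k) powr s * (fst (Z (t - int n) w) $ k $ j) powr s) \<partial>M)
          = E n k * m k j"
        using E_step[OF g, of t n i k] by (simp add: E_def m_def Z_def)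
    qed
    finally show ?thesis .
  qed
  have claim1: "(\<Sum>j\<in>UNIV. E n j * ennreal (v j)) \<le> ennreal (r ^ n * v i)" for n
  proof (induction n)
    case 0
    have E0: "E 0 j = (if j = i then 1 else 0)" for j
      by (simp add: E_def mat_def emeasure_space_1)
    have "(\<Sum>j\<in>UNIV. E 0 j * ennreal (v j)) = (\<Sum>j\<in>UNIV. if j = i then ennreal (v j) else 0)"
      by (intro sum.cong refl) (case_tac "x = i", simp_all only: E0 if_True if_False mult_1 mult_zero_left, simp)
    also have "\<dots> = ennreal (v i)" using sum.delta[OF finite, of i "\<lambda>j. ennreal (v j)"] by (simp only: UNIV_I if_True)
    finally have eq: "(\<Sum>j\<in>UNIV. E 0 j * ennreal (v j)) = ennreal (v i)" .
    show ?case unfolding power_0 mult_1 using eq by (rule eq_refl)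
  next
    case (Suc n)
    have "(\<Sum>j\<in>UNIV. E (Suc n) j * ennreal (v j)) \<le> (\<Sum>j\<in>UNIV. (\<Sum>k\<in>UNIV. E n k * m k j) * ennreal (v j))"
      by (intro sum_mono mult_right_mono step) auto
    also have "\<dots> = (\<Sum>k\<in>UNIV. E n k * (\<Sum>j\<in>UNIV. m k j * ennreal (v j)))"
      by (simp add: sum_distrib_right sum_distrib_left mult.assoc) (rule sum.swap)
    also have "\<dots> \<le> (\<Sum>k\<in>UNIV. E n k * ennreal (r * v k))"
      by (intro sum_mono mult_left_mono) (auto simp: m_def Mv)
    also have "\<dots> = ennreal r * (\<Sum>k\<in>UNIV. E n k * ennreal (v k))"
      using r v by (simp add: ennreal_mult sum_distrib_left less_imp_le mult.assoc mult.left_commute)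
    also have "\<dots> \<le> ennreal r * ennreal (r ^ n * v i)"
      by (intro mult_left_mono Suc) auto
    also have "\<dots> = ennreal (r ^ Suc n * v i)"
      using r v by (simp add: ennreal_mult[symmetric] less_imp_le mult.assoc)
    finally show ?case .
  qed
  have claim2: "(\<integral>\<^sup>+w. ennreal ((X n w) powr s) \<partial>M) \<le> ennreal (r ^ n * v i)" for n
  proof -
    have "(\<integral>\<^sup>+w. ennreal ((X n w) powr s) \<partial>M) \<le> (\<integral>\<^sup>+w. (\<Sum>j\<in>UNIV. ennreal ((mat_prod A t n w $ i $ j) powr s *
              (snd (Z (t - int n) w) $ j) powr s)) \<partial>M)"
    proof (rule nn_integral_mono_AE)
      show "AE w in M. ennreal ((X n w) powr s) \<le>
          (\<Sum>j\<in>UNIV. ennreal ((mat_prod A t n w $ i $ j) powr s * (snd (Z (t - int n) w) $ j) powr s))"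
        using nn_all Pnn
      proof eventually_elim
        case (elim w)
        have "(X n w) powr s = (\<Sum>j\<in>UNIV. mat_prod A t n w $ i $ j * B (t - int n) w $ j) powr s"
          by (simp add: X_def matrix_vector_mult_def)
        also have "\<dots> \<le> (\<Sum>j\<in>UNIV. (mat_prod A t n w $ i $ j * B (t - int n) w $ j) powr s)"
          using elim s by (intro powr_sum_le) auto
        also have "\<dots> = (\<Sum>j\<in>UNIV. (mat_prod A t n w $ i $ j) powr s * (snd (Z (t - int n) w) $ j) powr s)"
          using elim by (intro sum.cong refl) (simp add: powr_mult Z_def)
        finally show ?case by (simp add: ennreal_leI)
      qed
    qed
    also have "\<dots> = (\<Sum>j\<in>UNIV. \<integral>\<^sup>+w. ennreal ((mat_prod A t n w $ i $ j) powr s *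
              (snd (Z (t - int n) w) $ j) powr s) \<partial>M)"
      by (rule nn_integral_sum) (simp add: Z_def)
    also have "\<dots> = (\<Sum>j\<in>UNIV. E n j * (\<integral>\<^sup>+w. ennreal ((B 0 w $ j) powr s) \<partial>M))"
    proof (intro sum.cong refl)
      fix j
      have g: "(\<lambda>p::(real^'b^'b) \<times> (real^'b). (snd p $ j) powr s) \<in> borel_measurable borel"
        by measurable
      show "(\<integral>\<^sup>+w. ennreal ((mat_prod A t n w $ i $ j) powr s * (snd (Z (t - int n) w) $ j) powr s) \<partial>M)
          = E n j * (\<integral>\<^sup>+w. ennreal ((B 0 w $ j) powr s) \<partial>M)"
        using E_step[OF g, of t n i j] by (simp add: E_def Z_def)
    qed
    also have "\<dots> \<le> (\<Sum>j\<in>UNIV. E n j * ennreal (v j))"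
      by (intro sum_mono mult_left_mono Bv) auto
    also have "\<dots> \<le> ennreal (r ^ n * v i)" by (rule claim1)
    finally show ?thesis .
  qed
  have Xeq: "X n w = (\<Sum>j\<in>UNIV. mat_prod A t n w $ i $ j * B (t - int n) w $ j)" for n w
    by (simp add: X_def matrix_vector_mult_def)
  have Xm: "(\<lambda>w. ennreal ((X n w) powr s)) \<in> borel_measurable M" for n
    unfolding Xeq by measurable
  have "(\<integral>\<^sup>+w. (\<Sum>n. ennreal ((X n w) powr s)) \<partial>M) = (\<Sum>n. \<integral>\<^sup>+w. ennreal ((X n w) powr s) \<partial>M)"
    by (rule nn_integral_suminf[OF Xm])
  also have "\<dots> \<le> (\<Sum>n. ennreal (r ^ n * v i))"
    by (rule suminf_le[OF claim2 summableI summableI])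
  also have "\<dots> = ennreal (\<Sum>n. r ^ n * v i)"
  proof (rule suminf_ennreal2)
    show "\<And>n. 0 \<le> r ^ n * v i" using r v by (simp add: less_imp_le)
    show "summable (\<lambda>n. r ^ n * v i)" using r by (intro summable_mult2 summable_geometric) simp
  qed
  finally have fin: "(\<integral>\<^sup>+w. (\<Sum>n. ennreal ((X n w) powr s)) \<partial>M) \<noteq> \<infinity>"
    using ennreal_less_top[of "\<Sum>n. r ^ n * v i"] by (metis le_less_trans less_irrefl infinity_ennreal_def)
  have Sm: "(\<lambda>w. \<Sum>n. ennreal ((X n w) powr s)) \<in> borel_measurable M"
    by (rule borel_measurable_suminf_order[OF Xm])
  have "AE w in M. (\<Sum>n. ennreal ((X n w) powr s)) \<noteq> \<infinity>"
    by (rule nn_integral_PInf_AE[OF Sm fin])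
  then show ?thesis using Xnn
  proof eventually_elim
    case (elim w)
    have "summable (\<lambda>n. (X n w) powr s)"
      by (rule summable_suminf_not_top) (use elim in auto)
    then have "summable (\<lambda>n. X n w)"
      by (rule summable_from_powr[rotated 3]) (use elim s in auto)
    then show ?case by (simp add: X_def)
  qed
qed

end


lemma (in prob_space) powr_fin:
  fixes X :: "'a \<Rightarrow> real"
  assumes Xm: "X \<in> borel_measurable M" and nn: "AE w in M. X w \<ge> 0"
    and s: "0 < s" "s \<le> a" and fin: "(\<integral>\<^sup>+w. ennreal (X w powr a) \<partial>M) < \<infinity>"
  shows "(\<integral>\<^sup>+w. ennreal (X w powr s) \<partial>M) < \<infinity>"
proof -
  have pt: "x powr s \<le> 1 + x powr a" if "x \<ge> 0" for x :: real
  proof (cases "x \<le> 1")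
    case True
    then have "x powr s \<le> 1" using that s by (simp add: powr_le1)
    then show ?thesis by (smt (verit) powr_ge_zero)
  next
    case False
    then have "x powr s \<le> x powr a" using s by (intro powr_mono) auto
    then show ?thesis by simp
  qed
  have "(\<integral>\<^sup>+w. ennreal (X w powr s) \<partial>M) \<le> (\<integral>\<^sup>+w. 1 + ennreal (X w powr a) \<partial>M)"
  proof (rule nn_integral_mono_AE)
    show "AE w in M. ennreal (X w powr s) \<le> 1 + ennreal (X w powr a)"
      using nn
    proof eventually_elim
      case (elim w)
      have "ennreal (X w powr s) \<le> ennreal (1 + X w powr a)" using pt[OF elim] by (rule ennreal_leI)
      also have "\<dots> = 1 + ennreal (X w powr a)" by (subst ennreal_plus) auto
      finally show ?case .
    qed
  qed
  also have "\<dots> = 1 + (\<integral>\<^sup>+w. ennreal (X w powr a) \<partial>M)"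
    using Xm by (subst nn_integral_add) (auto simp: emeasure_space_1)
  also have "\<dots> < \<infinity>" using fin by (simp add: ennreal_add_less_top) 
  finally show ?thesis .
qed

lemma (in prob_space) diag_lt1:
  fixes X :: "'a \<Rightarrow> real"
  assumes Xm: "X \<in> borel_measurable M" and nn: "AE w in M. X w \<ge> 0" and a: "a > 0"
    and one: "(\<integral>\<^sup>+w. ennreal (X w powr a) \<partial>M) = 1" and na: "non_arithmetic_log M X"
    and s: "0 < s" "2 * s \<le> a"
  shows "(\<integral>\<^sup>+w. ennreal (X w powr s) \<partial>M) < 1"
proof -
  define \<theta> where "\<theta> = 2 * s / a"
  have th: "0 < \<theta>" "\<theta> \<le> 1" using a s by (auto simp: \<theta>_def field_simps)
  have pt: "x powr (2 * s) \<le> \<theta> * x powr a + (1 - \<theta>)" if "x \<ge> 0" for x :: real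
  proof (cases "x = 0")
    case True then show ?thesis using th s by simp
  next
    case False
    then have xp: "x > 0" using that by simp
    have "(x powr a) powr \<theta> * 1 powr (1 - \<theta>) \<le> \<theta> * x powr a + (1 - \<theta>) * 1"
      using th xp by (intro Youngs_inequality_0) auto
    moreover have "(x powr a) powr \<theta> = x powr (2 * s)"
      using a by (simp add: powr_powr \<theta>_def)
    ultimately show ?thesis by simp
  qed
  have I2: "(\<integral>\<^sup>+w. ennreal (X w powr (2 * s)) \<partial>M) \<le> 1"
  proof -
    have "(\<integral>\<^sup>+w. ennreal (X w powr (2 * s)) \<partial>M) \<le> (\<integral>\<^sup>+w. ennreal \<theta> * ennreal (X w powr a) + ennreal (1 - \<theta>) \<partial>M)"
    proof (rule nn_integral_mono_AE)
      show "AE w in M. ennreal (X w powr (2 * s)) \<le> ennreal \<theta> * ennreal (X w powr a) + ennreal (1 - \<theta>)"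
        using nn
      proof eventually_elim
        case (elim w)
        have "ennreal (X w powr (2 * s)) \<le> ennreal (\<theta> * X w powr a + (1 - \<theta>))"
          using pt[OF elim] by (rule ennreal_leI)
        also have "\<dots> = ennreal \<theta> * ennreal (X w powr a) + ennreal (1 - \<theta>)"
          using th by (simp add: ennreal_plus ennreal_mult)
        finally show ?case .
      qed
    qed
    also have "\<dots> = ennreal \<theta> * 1 + ennreal (1 - \<theta>)"
      using Xm by (subst nn_integral_add) (auto simp: nn_integral_cmult one emeasure_space_1)
    also have "\<dots> = 1" using th by (simp add: ennreal_plus[symmetric] del: ennreal_plus)
    finally show ?thesis .
  qed
  define y where "y w = X w powr s" for w
  have ym: "y \<in> borel_measurable M" unfolding y_def using Xm by measurable
  have y2: "y w ^ 2 = X w powr (2 * s)" for w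
    by (simp add: y_def power2_eq_square powr_add[symmetric])
  have ynn: "y w \<ge> 0" for w by (simp add: y_def)
  have sum_le: "(\<integral>\<^sup>+w. ennreal (y w) \<partial>M) + (\<integral>\<^sup>+w. ennreal ((1 - y w)^2 / 2) \<partial>M) \<le> 1"
  proof -
    have "(\<integral>\<^sup>+w. ennreal (y w) \<partial>M) + (\<integral>\<^sup>+w. ennreal ((1 - y w)^2 / 2) \<partial>M)
        = (\<integral>\<^sup>+w. ennreal (y w) + ennreal ((1 - y w)^2 / 2) \<partial>M)"
      using ym by (subst nn_integral_add) auto
    also have "\<dots> = (\<integral>\<^sup>+w. ennreal (1/2) + ennreal (1/2) * ennreal (X w powr (2 * s)) \<partial>M)"
    proof (rule nn_integral_cong)
      fix w
      have e0: "y w + (1 - y w)^2 / 2 = 1/2 + 1/2 * y w ^ 2" by (simp add: power2_eq_square field_simps)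
      have e: "y w + (1 - y w)^2 / 2 = 1/2 + 1/2 * X w powr (2 * s)" unfolding e0 y2 ..
      have "ennreal (y w) + ennreal ((1 - y w)^2 / 2) = ennreal (y w + (1 - y w)^2 / 2)"
        by (rule ennreal_plus[symmetric]) (auto simp: ynn)
      also have "\<dots> = ennreal (1/2 + 1/2 * X w powr (2 * s))" by (simp only: e)
      also have "\<dots> = ennreal (1/2) + ennreal (1/2 * X w powr (2 * s))" by (rule ennreal_plus) auto
      also have "\<dots> = ennreal (1/2) + ennreal (1/2) * ennreal (X w powr (2 * s))"
        by (subst ennreal_mult) auto
      finally show "ennreal (y w) + ennreal ((1 - y w)^2 / 2) = ennreal (1/2) + ennreal (1/2) * ennreal (X w powr (2 * s))" .
    qed
    also have "\<dots> = ennreal (1/2) + ennreal (1/2) * (\<integral>\<^sup>+w. ennreal (X w powr (2 * s)) \<partial>M)"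
      using Xm by (subst nn_integral_add) (auto simp: nn_integral_cmult emeasure_space_1)
    also have "\<dots> \<le> ennreal (1/2) + ennreal (1/2) * 1"
      by (intro add_left_mono mult_left_mono I2) auto
    also have "\<dots> = ennreal (1/2 + 1/2)" unfolding mult_1_right by (rule ennreal_plus[symmetric]) auto
    also have "\<dots> = 1" by simp
    finally show ?thesis .
  qed
  have pos: "(\<integral>\<^sup>+w. ennreal ((1 - y w)^2 / 2) \<partial>M) \<noteq> 0"
  proof
    assume "(\<integral>\<^sup>+w. ennreal ((1 - y w)^2 / 2) \<partial>M) = 0"
    then have "AE w in M. ennreal ((1 - y w)^2 / 2) = 0"
      using ym by (subst (asm) nn_integral_0_iff_AE) auto
    then have "AE w in M. X w > 0 \<longrightarrow> (\<exists>k::int. ln (X w) = 1 * of_int k)"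
      using nn
    proof eventually_elim
      case (elim w)
      then have "(1 - y w)^2 \<le> 0" by simp
      then have "y w = 1" by simp
      then have "X w powr s = 1" by (simp add: y_def)
      then have X1: "X w = 1"
      proof -
        assume h: "X w powr s = 1"
        have "X w \<noteq> 0" using h by auto
        then have xp: "X w > 0" using elim(2) by simp
        have "X w = X w powr (s * (1 / s))" using s xp by simp
        also have "\<dots> = (X w powr s) powr (1 / s)" by (simp add: powr_powr)
        also have "\<dots> = 1" using h by simp
        finally show ?thesis .
      qed
      then show ?case by (intro impI exI[of _ 0]) simp
    qed
    then have "\<exists>h>0. AE w in M. X w > 0 \<longrightarrow> (\<exists>k::int. ln (X w) = h * of_int k)"
      using zero_less_one by blast
    with na show False unfolding non_arithmetic_log_def by blast
  qed
  show ?thesis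
  proof (rule ccontr)
    assume "\<not> ?thesis"
    then have "1 \<le> (\<integral>\<^sup>+w. ennreal (X w powr s) \<partial>M)" by simp
    then have "1 + (\<integral>\<^sup>+w. ennreal ((1 - y w)^2 / 2) \<partial>M) \<le> (\<integral>\<^sup>+w. ennreal (y w) \<partial>M) + (\<integral>\<^sup>+w. ennreal ((1 - y w)^2 / 2) \<partial>M)"
      unfolding y_def by (rule add_right_mono)
    then have "1 + (\<integral>\<^sup>+w. ennreal ((1 - y w)^2 / 2) \<partial>M) \<le> 1 + 0"
      using order_trans[OF _ sum_le] by (simp only: add_0_right)
    then have "(\<integral>\<^sup>+w. ennreal ((1 - y w)^2 / 2) \<partial>M) \<le> 0"
      by (subst (asm) ennreal_add_left_cancel_le) auto
    with pos show False by simp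
  qed
qed


lemma exists_v:
  fixes mr :: "'n::{finite,linorder} \<Rightarrow> 'n \<Rightarrow> real" and c :: "'n \<Rightarrow> real"
  assumes nn: "\<And>k l. mr k l \<ge> 0" and low: "\<And>k l. l < k \<Longrightarrow> mr k l = 0" and dg: "\<And>k. mr k k < 1"
  shows "\<exists>r v. 0 \<le> r \<and> r < 1 \<and> (\<forall>k. v k > 0) \<and> (\<forall>k. (\<Sum>l\<in>UNIV. mr k l * v l) \<le> r * v k) \<and> (\<forall>j. c j \<le> v j)"
proof -
  define mx where "mx = Max (range (\<lambda>k. mr k k))"
  have mxge: "mr k k \<le> mx" for k unfolding mx_def by (rule Max_ge) auto
  have mxlt: "mx < 1" unfolding mx_def using dg by (subst Max_less_iff) auto
  have mx0: "0 \<le> mx" using mxge[of undefined] nn[of undefined undefined] by linarith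
  define r where "r = (1 + mx) / 2"
  have r: "0 \<le> r" "r < 1" "mx < r" using mx0 mxlt by (auto simp: r_def)
  define S where "S = (\<Sum>k\<in>UNIV. \<Sum>l\<in>UNIV. mr k l)"
  have rowS: "(\<Sum>l\<in>UNIV. mr k l) \<le> S" for k
    unfolding S_def by (rule member_le_sum[where f="\<lambda>k. \<Sum>l\<in>UNIV. mr k l"]) (auto intro!: sum_nonneg nn)
  have S0: "0 \<le> S" unfolding S_def by (auto intro!: sum_nonneg nn)
  define \<epsilon> where "\<epsilon> = min 1 ((r - mx) / (S + 1))"
  have e: "0 < \<epsilon>" "\<epsilon> \<le> 1" using r S0 by (auto simp: \<epsilon>_def)
  have eS: "\<epsilon> * S \<le> r - mx"
  proof -
    have "\<epsilon> * S \<le> (r - mx) / (S + 1) * S" using S0 by (intro mult_right_mono) (auto simp: \<epsilon>_def)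
    also have "\<dots> \<le> (r - mx) / (S + 1) * (S + 1)" using S0 r by (intro mult_left_mono) auto
    also have "\<dots> = r - mx" using S0 by simp
    finally show ?thesis .
  qed
  define rk where "rk k = card {l. l < k}" for k :: 'n
  have rk_less: "rk k + 1 \<le> rk l" if "k < l" for k l
  proof -
    have "insert k {x. x < k} \<subseteq> {x. x < l}" using that by auto
    then have "card (insert k {x. x < k}) \<le> card {x. x < l}" by (intro card_mono) auto
    then show ?thesis by (simp add: rk_def)
  qed
  define N where "N = CARD('n)"
  have rkN: "rk k \<le> N" for k unfolding rk_def N_def by (intro card_mono) auto
  define v0 where "v0 k = \<epsilon> ^ rk k" for k
  have v0pos: "v0 k > 0" for k using e by (simp add: v0_def)
  have v0low: "\<epsilon> ^ N \<le> v0 k" for k unfolding v0_def using e rkN by (intro power_decreasing) auto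
  have v0dec: "v0 l \<le> \<epsilon> * v0 k" if "k < l" for k l
  proof -
    have "v0 l \<le> \<epsilon> ^ (rk k + 1)" unfolding v0_def using e rk_less[OF that] by (intro power_decreasing) auto
    then show ?thesis by (simp add: v0_def mult.commute)
  qed
  have M0: "(\<Sum>l\<in>UNIV. mr k l * v0 l) \<le> r * v0 k" for k
  proof -
    have tw: "mr k l * v0 l \<le> (if l = k then mr k k * v0 k else 0) + mr k l * (\<epsilon> * v0 k)" for l
    proof (cases l k rule: linorder_cases)
      case less then show ?thesis using low[OF less] nn[of k l] e v0pos[of k] by simp
    next
      case equal then show ?thesis using nn[of k k] e v0pos[of k] by simp
    next
      case greater
      have "mr k l * v0 l \<le> mr k l * (\<epsilon> * v0 k)" using nn[of k l] v0dec[OF greater] by (rule mult_left_mono[rotated])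
      then show ?thesis using greater by simp
    qed
    have "(\<Sum>l\<in>UNIV. mr k l * v0 l) \<le> (\<Sum>l\<in>UNIV. (if l = k then mr k k * v0 k else 0) + mr k l * (\<epsilon> * v0 k))"
      by (rule sum_mono) (rule tw)
    also have "\<dots> = mr k k * v0 k + (\<Sum>l\<in>UNIV. mr k l) * (\<epsilon> * v0 k)"
      by (simp add: sum.distrib sum_distrib_right)
    also have "\<dots> \<le> mx * v0 k + S * (\<epsilon> * v0 k)"
      using mxge[of k] rowS[of k] v0pos[of k] e by (intro add_mono mult_right_mono) auto
    also have "\<dots> = (mx + \<epsilon> * S) * v0 k" by (simp add: algebra_simps)
    also have "\<dots> \<le> r * v0 k" using eS v0pos[of k] by (intro mult_right_mono) auto
    finally show ?thesis .
  qed
  define C where "C = ((\<Sum>j\<in>UNIV. \<bar>c j\<bar>) + 1) / \<epsilon> ^ N"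
  have C: "C > 0" using e unfolding C_def by (intro divide_pos_pos add_nonneg_pos sum_nonneg) auto
  define v where "v k = C * v0 k" for k
  show ?thesis
  proof (intro exI conjI allI)
    show "0 \<le> r" "r < 1" by (fact r)+
    fix k
    show "v k > 0" using C v0pos by (simp add: v_def)
    have "(\<Sum>l\<in>UNIV. mr k l * v l) = C * (\<Sum>l\<in>UNIV. mr k l * v0 l)"
      by (simp add: v_def sum_distrib_left algebra_simps)
    also have "\<dots> \<le> C * (r * v0 k)" using C M0 by (intro mult_left_mono) auto
    finally show "(\<Sum>l\<in>UNIV. mr k l * v l) \<le> r * v k" by (simp add: v_def algebra_simps)
  next
    fix j
    have "c j \<le> (\<Sum>j\<in>UNIV. \<bar>c j\<bar>) + 1"
      using member_le_sum[of j UNIV "\<lambda>j. \<bar>c j\<bar>"] by simp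
    also have "\<dots> = C * \<epsilon> ^ N" using e by (simp add: C_def)
    also have "\<dots> \<le> C * v0 j" using C v0low by (intro mult_left_mono) auto
    finally show "c j \<le> v j" by (simp add: v_def)
  qed
qed


lemma pred_fst_zero:
  "{x \<in> space borel. (\<lambda>p::(real^'n::finite^'n) \<times> (real^'n). fst p $ i $ j = 0) x} \<in> sets borel"
  by measurable

theorem lemma5p1:
  fixes M :: "'w measure"
    and A :: "int \<Rightarrow> 'w \<Rightarrow> real^('n::{finite,linorder})^('n::{finite,linorder})"
    and B :: "int \<Rightarrow> 'w \<Rightarrow> real^('n::{finite,linorder})"
    and \<alpha> :: "('n::{finite,linorder}) \<Rightarrow> real"
  assumes "prob_space M"
    and iid_indep: "prob_space.indep_vars M (\<lambda>_. borel) (\<lambda>t w. (A t w, B t w)) UNIV"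
    and iid_dist: "\<And>t. distr M borel (\<lambda>w. (A t w, B t w)) = distr M borel (\<lambda>w. (A 0 w, B 0 w))"
    and T1: "AE w in M. (\<forall>i j. A 0 w $ i $ j \<ge> 0) \<and> (\<forall>i. B 0 w $ i \<ge> 0)"
    and T2: "\<And>i. measure M {w \<in> space M. B 0 w $ i = 0} < 1"
    and T3: "\<And>i j. i > j \<Longrightarrow> measure M {w \<in> space M. A 0 w $ i $ j = 0} = 1"
    and T4_pos: "\<And>i. \<alpha> i > 0"
    and T4_inj: "inj \<alpha>"
    and T4: "\<And>i. (\<integral>\<^sup>+ w. ennreal ((A 0 w $ i $ i) powr \<alpha> i) \<partial>M) = 1"
    and T5: "\<And>i j. (\<integral>\<^sup>+ w. ennreal ((A 0 w $ i $ j) powr \<alpha> i) \<partial>M) < \<infinity>"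
    and T6: "\<And>i. (\<integral>\<^sup>+ w. ennreal ((B 0 w $ i) powr \<alpha> i) \<partial>M) < \<infinity>"
    and T7: "\<And>i. (\<integral>\<^sup>+ w. ennreal ((A 0 w $ i $ i) powr \<alpha> i * max 0 (ln (A 0 w $ i $ i))) \<partial>M) < \<infinity>"
    and T8: "\<And>i. non_arithmetic_log M (\<lambda>w. A 0 w $ i $ i)"
  shows "\<forall>t i. AE w in M.
           stat_sol A B t w $ i =
             (\<Sum>n. diag_prod A i t (t - int n + 1) w * D_term M A B (stat_sol A B) i (t - int n) w)"
proof -
  interpret P: prob_space M by fact
  interpret L: LS2 M A B
    by unfold_locales (use iid_indep iid_dist T1 in auto)
  define \<beta> where "\<beta> = min 1 (Min (range \<alpha>))"
  have \<beta>: "0 < \<beta>" "\<beta> \<le> 1" "\<And>k. \<beta> \<le> \<alpha> k"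
    using T4_pos by (auto simp: \<beta>_def min_le_iff_disj intro: Min_le)
  define s where "s = \<beta> / 2"
  have s: "0 < s" "s \<le> 1" "\<And>k. 2 * s \<le> \<alpha> k" "\<And>k. s \<le> \<alpha> k"
    using \<beta> by (auto simp: s_def) (smt (verit) \<beta>(3))+
  have Ann: "AE w in M. A 0 w $ k $ l \<ge> 0" for k l using T1 by (rule eventually_mono) auto
  have Bnn: "AE w in M. B 0 w $ j \<ge> 0" for j using T1 by (rule eventually_mono) auto
  define m where "m k l = (\<integral>\<^sup>+w. ennreal ((A 0 w $ k $ l) powr s) \<partial>M)" for k l
  have mfin: "m k l < \<infinity>" for k l
    unfolding m_def by (rule P.powr_fin[OF _ Ann _ _ T5]) (use s in auto)
  have mdiag: "m k k < 1" for k
    unfolding m_def by (rule P.diag_lt1[OF _ Ann T4_pos T4 T8]) (use s in auto)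
  have mlow: "m k l = 0" if "l < k" for k l
  proof -
    have "AE w in M. w \<in> {w \<in> space M. A 0 w $ k $ l = 0}" by (rule P.AE_prob_1) (use T3[OF that] in simp)
    then have "AE w in M. ennreal ((A 0 w $ k $ l) powr s) = 0" by (rule eventually_mono) auto
    then show ?thesis unfolding m_def by (simp add: nn_integral_0_iff_AE)
  qed
  have bfin: "(\<integral>\<^sup>+w. ennreal ((B 0 w $ j) powr s) \<partial>M) < \<infinity>" for j
    by (rule P.powr_fin[OF _ Bnn _ _ T6]) (use s in auto)
  define mr where "mr k l = enn2real (m k l)" for k l
  have m_eq: "m k l = ennreal (mr k l)" for k l using mfin[of k l] by (simp add: mr_def)
  have mr_nn: "mr k l \<ge> 0" for k l by (simp add: mr_def)
  have mr_low: "mr k l = 0" if "l < k" for k l using mlow[OF that] by (simp add: mr_def)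
  have mr_dg: "mr k k < 1" for k
    using mdiag[of k] unfolding m_eq by (simp add: ennreal_less_iff mr_nn)
  define c where "c j = enn2real (\<integral>\<^sup>+w. ennreal ((B 0 w $ j) powr s) \<partial>M)" for j
  have c_eq: "(\<integral>\<^sup>+w. ennreal ((B 0 w $ j) powr s) \<partial>M) = ennreal (c j)" for j
    using bfin[of j] by (simp add: c_def)
  obtain r v where r: "0 \<le> r" "r < 1" and v: "\<And>k. v k > 0"
    and Mv0: "\<And>k. (\<Sum>l\<in>UNIV. mr k l * v l) \<le> r * v k" and cv: "\<And>j. c j \<le> v j"
    using exists_v[of mr c, OF mr_nn mr_low mr_dg] by blast
  have Mv: "(\<Sum>l\<in>UNIV. (\<integral>\<^sup>+w. ennreal ((A 0 w $ k $ l) powr s) \<partial>M) * ennreal (v l)) \<le> ennreal (r * v k)" for k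
  proof -
    have "(\<Sum>l\<in>UNIV. (\<integral>\<^sup>+w. ennreal ((A 0 w $ k $ l) powr s) \<partial>M) * ennreal (v l))
        = (\<Sum>l\<in>UNIV. ennreal (mr k l * v l))"
      using v mr_nn by (intro sum.cong refl) (simp add: m_eq[unfolded m_def] ennreal_mult less_imp_le)
    also have "\<dots> = ennreal (\<Sum>l\<in>UNIV. mr k l * v l)"
      using v mr_nn by (intro sum_ennreal) (auto intro: mult_nonneg_nonneg less_imp_le)
    also have "\<dots> \<le> ennreal (r * v k)" using Mv0 by (rule ennreal_leI)
    finally show ?thesis .
  qed
  have Bv: "(\<integral>\<^sup>+w. ennreal ((B 0 w $ j) powr s) \<partial>M) \<le> ennreal (v j)" for j
    unfolding c_eq using cv by (rule ennreal_leI)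
  have summ: "AE w in M. summable (\<lambda>n. (mat_prod A t n w *v B (t - int n) w) $ i)" for t i
    by (rule L.conv[OF s(1,2) r v Mv Bv])
  have zero: "AE w in M. A t w $ i $ j = 0" if "j \<noteq> i" "\<not> prec M A i j" for t i j
  proof -
    have "\<not> measure M {w \<in> space M. A 0 w $ i $ j > 0} > 0" using that by (simp add: prec_def)
    then have "measure M {w \<in> space M. A 0 w $ i $ j > 0} = 0" using measure_nonneg[of M] by (meson not_less antisym)
    then have "AE w in M. w \<notin> {w \<in> space M. A 0 w $ i $ j > 0}"
      by (subst (asm) P.prob_eq_0) (auto)
    then have "AE w in M. (\<lambda>p. fst p $ i $ j = 0) (L.Z 0 w)"
      using Ann[of i j] AE_space by eventually_elim (auto simp: L.Z_def)
    moreover note Pm = pred_fst_zero[of i j]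
    ultimately have "AE w in M. (\<lambda>p. fst p $ i $ j = 0) (L.Z t w)"
      using L.iid_AE[OF Pm] by blast
    then show ?thesis by (simp add: L.Z_def)
  qed
  have zero_all: "AE w in M. \<forall>t i j. j \<noteq> i \<and> \<not> prec M A i j \<longrightarrow> A t w $ i $ j = 0"
    unfolding AE_all_countable
  proof (intro allI)
    fix t i j
    show "AE w in M. j \<noteq> i \<and> \<not> prec M A i j \<longrightarrow> A t w $ i $ j = 0"
      by (cases "j \<noteq> i \<and> \<not> prec M A i j") (auto intro: zero)
  qed
  have summ_all: "AE w in M. \<forall>t i. summable (\<lambda>n. (mat_prod A t n w *v B (t - int n) w) $ i)"
    unfolding AE_all_countable using summ by blast
  show ?thesis
  proof (intro allI)
    fix t i
    show "AE w in M. stat_sol A B t w $ i =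
             (\<Sum>n. diag_prod A i t (t - int n + 1) w * D_term M A B (stat_sol A B) i (t - int n) w)"
      using L.nn_all zero_all summ_all
    proof eventually_elim
      case (elim w)
      show ?case unfolding D_term_def
        by (rule det_main[where S="\<lambda>i. {j. prec M A i j}"]) (use elim in \<open>auto simp: prec_def\<close>)
    qed
  qed
qed


end
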